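(* The output of MPS is not always decomposable, even under lexicographic preferences. Concretely, for $n=3$, $p=2$, $D_F=\{1_F,2_F,3_F\}$, $D_B=\{1_B,2_B,3_B\}$ and the lexicographic preferences: agent 1: $F\rhd_1 B$, $1_F\rhd 2_F\rhd 3_F$, $1_B\rhd 2_B\rhd 3_B$; agent 2: $F\rhd_2 B$, $1_F\rhd 2_F\rhd 3_F$, $1_B\rhd 3_B\rhd 2_B$; agent 3: $B\rhd_3 F$, $1_F\rhd 2_F\rhd 3_F$, $2_B\rhd 3_B\rhd 1_B$, the assignment $\mathrm{MPS}(R)$ is not decomposable.
   Context: Setting: agents $N=\{1,\dots,n\}$; types $D_i$ pairwise disjoint, $|D_i|=n$, unit supply; bundles $\mathcal D=\prod_i D_i$, $x_i$ the type-$i$ component. An assignment is an $n\times|\mathcal D|$ matrix $(p_{j,x})$ with entries in $[0,1]$, rows summing to $1$, and $\sum_j\sum_{x\ni o}p_{j,x}=1$ for each item $o$; it is discrete if all entries are in $\{0,1\}$ and decomposable if it is a convex combination of discrete assignments. Lexicographic preference: importance order $\rhd_j$ on types and orders $\rhd^i_j$ on each $D_i$; $x\succ_j y$ iff some type $i$ has $x_i\rhd^i_j y_i$ and $x_{i'}=y_{i'}$ for all $i'\rhd_j i$. MPS: items start with supply $1$; a bundle is available if all its items have positive remaining supply. Continuously in time each agent eats her most preferred available bundle at rate $1$ (each item of it consumed at rate $1$, $p_{j,x}$ growing at rate $1$); exhausted items make all bundles containing them unavailable; run until all items are exhausted. *)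

theory Defs
  imports Complex_Main
begin

text \<open>Encoding (0-indexed): agents are 0..<n, types are 0..<p, the items of type i
  are the pairs (i,k) with k < n.  A bundle is a list x of length p with x!i < n,
  its type-i component being the item (i, x!i).  An assignment is a function
  P :: agent \<Rightarrow> bndl \<Rightarrow> real (only agents < n and bundles in mps_bundles matter).\<close>

type_synonym mitem = "nat \<times> nat"
type_synonym bndl = "nat list"
type_synonym assignment = "nat \<Rightarrow> bndl \<Rightarrow> real"

definition mps_items :: "nat \<Rightarrow> nat \<Rightarrow> mitem set" where
  "mps_items n p = {(i, k). i < p \<and> k < n}"

definition mps_bundles :: "nat \<Rightarrow> nat \<Rightarrow> bndl set" where
  "mps_bundles n p = {x. length x = p \<and> (\<forall>i<p. x ! i < n)}"

definition bundle_contains :: "bndl \<Rightarrow> mitem \<Rightarrow> bool" where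
  "bundle_contains x it \<longleftrightarrow> fst it < length x \<and> x ! fst it = snd it"

definition is_assignment :: "nat \<Rightarrow> nat \<Rightarrow> assignment \<Rightarrow> bool" where
  "is_assignment n p P \<longleftrightarrow>
     (\<forall>j<n. \<forall>x\<in>mps_bundles n p. 0 \<le> P j x \<and> P j x \<le> 1)
   \<and> (\<forall>j<n. (\<Sum>x\<in>mps_bundles n p. P j x) = 1)
   \<and> (\<forall>it\<in>mps_items n p. (\<Sum>j<n. \<Sum>x\<in>{x\<in>mps_bundles n p. bundle_contains x it}. P j x) = 1)"

definition is_discrete_assignment :: "nat \<Rightarrow> nat \<Rightarrow> assignment \<Rightarrow> bool" where
  "is_discrete_assignment n p P \<longleftrightarrow> is_assignment n p P
     \<and> (\<forall>j<n. \<forall>x\<in>mps_bundles n p. P j x \<in> {0, 1})"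

definition decomposable :: "nat \<Rightarrow> nat \<Rightarrow> assignment \<Rightarrow> bool" where
  "decomposable n p P \<longleftrightarrow>
     (\<exists>(K::nat) (Q :: nat \<Rightarrow> assignment) (w :: nat \<Rightarrow> real).
        (\<forall>l<K. is_discrete_assignment n p (Q l) \<and> 0 \<le> w l)
      \<and> (\<Sum>l<K. w l) = 1
      \<and> (\<forall>j<n. \<forall>x\<in>mps_bundles n p. P j x = (\<Sum>l<K. w l * Q l j x)))"

text \<open>Lexicographic preference.  imp i is the importance rank of type i (smaller =
  more important); rk i k is the rank of item (i,k) in the order on D_i
  (smaller = better).  lex_pref p imp rk x y means x is strictly preferred to y.\<close>
definition lex_pref :: "nat \<Rightarrow> (nat \<Rightarrow> nat) \<Rightarrow> (nat \<Rightarrow> nat \<Rightarrow> nat) \<Rightarrow> bndl \<Rightarrow> bndl \<Rightarrow> bool" where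
  "lex_pref p imp rk x y \<longleftrightarrow>
     (\<exists>i<p. rk i (x ! i) < rk i (y ! i) \<and> (\<forall>i'<p. imp i' < imp i \<longrightarrow> x ! i' = y ! i'))"

text \<open>MPS as an event-driven simulation of the continuous eating process.  Between two
  consecutive exhaustion events every agent eats a fixed bundle, so the process is
  piecewise linear; one step advances to the next exhaustion time.
  pref j x y: agent j strictly prefers bundle x to bundle y.\<close>

type_synonym mps_state = "(mitem \<Rightarrow> real) \<times> assignment"

definition available :: "nat \<Rightarrow> nat \<Rightarrow> (mitem \<Rightarrow> real) \<Rightarrow> bndl \<Rightarrow> bool" where
  "available n p s x \<longleftrightarrow> x \<in> mps_bundles n p \<and> (\<forall>i<p. 0 < s (i, x ! i))"

definition eats :: "nat \<Rightarrow> nat \<Rightarrow> (nat \<Rightarrow> bndl \<Rightarrow> bndl \<Rightarrow> bool) \<Rightarrow> (mitem \<Rightarrow> real) \<Rightarrow> nat \<Rightarrow> bndl" where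
  "eats n p pref s j = (SOME x. available n p s x \<and> (\<forall>y. available n p s y \<longrightarrow> \<not> pref j y x))"

definition eat_rate :: "nat \<Rightarrow> nat \<Rightarrow> (nat \<Rightarrow> bndl \<Rightarrow> bndl \<Rightarrow> bool) \<Rightarrow> (mitem \<Rightarrow> real) \<Rightarrow> mitem \<Rightarrow> real" where
  "eat_rate n p pref s it = real (card {j. j < n \<and> bundle_contains (eats n p pref s j) it})"

definition next_event :: "nat \<Rightarrow> nat \<Rightarrow> (nat \<Rightarrow> bndl \<Rightarrow> bndl \<Rightarrow> bool) \<Rightarrow> (mitem \<Rightarrow> real) \<Rightarrow> real" where
  "next_event n p pref s = Min {s it / eat_rate n p pref s it | it.
       it \<in> mps_items n p \<and> 0 < s it \<and> 0 < eat_rate n p pref s it}"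

definition mps_step :: "nat \<Rightarrow> nat \<Rightarrow> (nat \<Rightarrow> bndl \<Rightarrow> bndl \<Rightarrow> bool) \<Rightarrow> mps_state \<Rightarrow> mps_state" where
  "mps_step n p pref st =
     (let s = fst st; P = snd st in
      if \<exists>it\<in>mps_items n p. 0 < s it then
        (let dt = next_event n p pref s in
          (\<lambda>it. s it - dt * eat_rate n p pref s it,
           \<lambda>j x. P j x + (if j < n \<and> x = eats n p pref s j then dt else 0)))
      else st)"

text \<open>Every step exhausts at least one item, so after |items| = p*n steps all
  items are exhausted (further steps are the identity).\<close>
definition MPS :: "nat \<Rightarrow> nat \<Rightarrow> (nat \<Rightarrow> bndl \<Rightarrow> bndl \<Rightarrow> bool) \<Rightarrow> assignment" where
  "MPS n p pref = snd ((mps_step n p pref ^^ (p * n)) (\<lambda>_. 1, \<lambda>_ _. 0))"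

text \<open>The concrete example: n = 3 agents, p = 2 types, type 0 = F, type 1 = B;
  item k of a type corresponds to the paper's (k+1).\<close>
definition ex_imp :: "nat \<Rightarrow> nat \<Rightarrow> nat" where
  "ex_imp j i = (if j = 2 then (if i = 1 then 0 else 1) else i)"

definition ex_rank :: "nat \<Rightarrow> nat \<Rightarrow> nat \<Rightarrow> nat" where
  "ex_rank j i k = [[[0,1,2],[0,1,2]], [[0,1,2],[0,2,1]], [[0,1,2],[2,0,1]]] ! j ! i ! k"

definition ex_pref :: "nat \<Rightarrow> bndl \<Rightarrow> bndl \<Rightarrow> bool" where
  "ex_pref j = lex_pref 2 (ex_imp j) (ex_rank j)"

end

theory Submission
  imports Defs
begin

lemma ex2: "(\<exists>i<(2::nat). P i) \<longleftrightarrow> P 0 \<or> P 1" by (auto simp: less_2_cases_iff)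
lemma all2: "(\<forall>i<(2::nat). P i) \<longleftrightarrow> P 0 \<and> P 1" by (auto simp: less_2_cases_iff)
lemma lt3: "(a::nat) < 3 \<Longrightarrow> a = 0 \<or> a = 1 \<or> a = 2" by arith
lemma bundles32_mem: "(x::nat list) \<in> mps_bundles 3 2 \<longleftrightarrow> x \<in> {[0,0],[0,1],[0,2],[1,0],[1,1],[1,2],[2,0],[2,1],[2,2]}"
proof
  assume "x \<in> mps_bundles 3 2"
  then have l: "length x = 2" and h: "x!0 < 3" "x!1 < 3" by (auto simp: mps_bundles_def)
  obtain a t where x1: "x = a # t" using l by (cases x) auto
  with l obtain b where x: "x = [a,b]" by (cases t) auto
  have "a < 3" "b < 3" using h unfolding x by simp_all
  then have "a = 0 \<or> a = 1 \<or> a = 2" "b = 0 \<or> b = 1 \<or> b = 2" using lt3 by blast+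
  then show "x \<in> {[0,0],[0,1],[0,2],[1,0],[1,1],[1,2],[2,0],[2,1],[2,2]}" unfolding x by (elim disjE) simp_all
next
  assume "x \<in> {[0,0],[0,1],[0,2],[1,0],[1,1],[1,2],[2,0],[2,1],[2,2]}"
  then show "x \<in> mps_bundles 3 2" unfolding mps_bundles_def all2 by auto
qed
lemma bundles32: "mps_bundles 3 2 = {[0,0],[0,1],[0,2],[1,0],[1,1],[1,2],[2,0],[2,1],[2,2]}"
  by (rule set_eqI, rule bundles32_mem)
lemma items32: "mps_items 3 2 = {(0,0),(0,1),(0,2),(1,0),(1,1),(1,2)}"
  unfolding mps_items_def by (auto simp: less_2_cases_iff less_Suc_eq numeral_eq_Suc)
lemma card3: "card {j::nat. j<3 \<and> Q j} = of_bool(Q 0)+of_bool(Q 1)+of_bool(Q 2)"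
proof -
  have e: "{j::nat. j<3 \<and> Q j} = (if Q 0 then {0} else {}) \<union> ((if Q 1 then {1} else {}) \<union> (if Q 2 then {2} else {}))"
    using lt3 by auto
  show ?thesis unfolding e by (cases "Q 0"; cases "Q 1"; cases "Q 2") simp_all
qed
lemma lex_irrefl[simp]: "\<not> lex_pref p imp rk x x" by (simp add: lex_pref_def)
lemma ex_irrefl[simp]: "\<not> ex_pref j x x" by (simp add: ex_pref_def)
lemma eats_eqI: assumes "x \<in> mps_bundles 3 2 \<and> (\<forall>i<2. 0 < s (i, x!i))"
  "\<forall>y\<in>mps_bundles 3 2. (\<forall>i<2. 0 < s (i, y!i)) \<and> y \<noteq> x \<longrightarrow> pref j x y \<and> \<not> pref j y x"
  "\<not> pref j x x"
  shows "eats 3 2 pref s j = x"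
  unfolding eats_def
  apply (rule some_equality)
  using assms unfolding available_def by blast+

definition supl :: "real list list \<Rightarrow> mitem \<Rightarrow> real" where
  "supl L = (\<lambda>(i,k). if i < 2 \<and> k < 3 then L!i!k else 1)"

lemma sup_app: "supl L (i,k) = (if i < 2 \<and> k < 3 then L!i!k else 1)" by (simp add: supl_def)

lemmas evs =  ex_pref_def lex_pref_def ex2 all2 ex_imp_def ex_rank_def sup_app

lemma rate_eq: assumes "\<And>j. j<3 \<Longrightarrow> eats 3 2 ex_pref s j = E!j"
  shows "eat_rate 3 2 ex_pref s it = of_bool(bundle_contains (E!0) it) + of_bool(bundle_contains (E!1) it) + of_bool(bundle_contains (E!2) it)"
proof -
  have eq: "{j. j < 3 \<and> bundle_contains (eats 3 2 ex_pref s j) it} = {j. j < 3 \<and> bundle_contains (E!j) it}"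
    using assms by auto
  show ?thesis by (simp only: eat_rate_def card3 eq) simp
qed

lemma step_gen:
  assumes E: "\<And>j. j<3 \<Longrightarrow> eats 3 2 ex_pref (supl L) j = E!j"
  and C: "\<exists>it\<in>mps_items 3 2. 0 < supl L it"
  and D: "next_event 3 2 ex_pref (supl L) = d"
  and S: "\<And>it. supl L it - d * eat_rate 3 2 ex_pref (supl L) it = supl L' it"
  shows "mps_step 3 2 ex_pref (supl L, P) = (supl L', \<lambda>j x. P j x + (if j<3 \<and> x = E!j then d else 0))"
proof -
  have 1: "(\<lambda>it. supl L it - d * eat_rate 3 2 ex_pref (supl L) it) = supl L'" using S by (rule ext)
  have 2: "(\<lambda>j x. P j x + (if j<3 \<and> x = eats 3 2 ex_pref (supl L) j then d else 0))
     = (\<lambda>j x. P j x + (if j<3 \<and> x = E!j then d else 0))"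
    using E by (intro ext) auto
  have "mps_step 3 2 ex_pref (supl L, P) = (\<lambda>it. supl L it - d * eat_rate 3 2 ex_pref (supl L) it,
       \<lambda>j x. P j x + (if j < 3 \<and> x = eats 3 2 ex_pref (supl L) j then d else 0))"
    using C by (simp add: mps_step_def Let_def D)
  then show ?thesis by (simp only: 1 2)
qed

lemma set_img: "{f it | it. it \<in> A \<and> Q it} = f ` {it\<in>A. Q it}" by auto
lemma filt_ins: "{x\<in>insert a B. P x} = (if P a then insert a {x\<in>B. P x} else {x\<in>B. P x})" by auto
lemma filt_empty: "{x\<in>{}. P x} = {}" by auto

lemma bc: "bundle_contains x (i,k) \<longleftrightarrow> i < length x \<and> x!i = k" by (simp add: bundle_contains_def)

lemma eatsI: assumes "x \<in> mps_bundles 3 2 \<and> (\<forall>i<2. 0 < s (i, x!i))"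
  "\<forall>y\<in>mps_bundles 3 2. (\<forall>i<2. 0 < s (i, y!i)) \<and> y \<noteq> x \<longrightarrow> ex_pref j x y \<and> \<not> ex_pref j y x"
  shows "eats 3 2 ex_pref s j = x"
  by (rule eats_eqI[where pref=ex_pref and j=j, OF assms]) simp

lemma three: "eats 3 2 ex_pref s 0 = E!0 \<and> eats 3 2 ex_pref s 1 = E!1 \<and> eats 3 2 ex_pref s 2 = E!2 \<Longrightarrow> j < 3 \<Longrightarrow> eats 3 2 ex_pref s j = E!j"
  using lt3[of j] by auto


definition L0 :: "real list list" where "L0 = [[1,1,1],[1,1,1]]"
definition L1 :: "real list list" where "L1 = [[0,1,1],[1/3,2/3,1]]"
definition L2 :: "real list list" where "L2 = [[0,1/2,1],[0,1/2,1]]"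
definition L3 :: "real list list" where "L3 = [[0,0,1],[0,1/6,5/6]]"
definition L4 :: "real list list" where "L4 = [[0,0,3/4],[0,0,3/4]]"
definition L5 :: "real list list" where "L5 = [[0,0,0],[0,0,0]]"
definition E0 :: "nat list list" where "E0 = [[0,0],[0,0],[0,1]]"
definition E1 :: "nat list list" where "E1 = [[1,0],[1,0],[1,1]]"
definition E2 :: "nat list list" where "E2 = [[1,1],[1,2],[1,1]]"
definition E3 :: "nat list list" where "E3 = [[2,1],[2,2],[2,1]]"
definition E4 :: "nat list list" where "E4 = [[2,2],[2,2],[2,2]]"

lemma E0: "j<3 \<Longrightarrow> eats 3 2 ex_pref (supl L0) j = E0!j"
  apply (rule three) unfolding E0_def L0_def
  by (intro conjI; rule eatsI; simp only: bundles32 ball_simps insert_iff; simp add: evs)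
lemma R0: "eat_rate 3 2 ex_pref (supl L0) it = of_bool(bundle_contains (E0!0) it) + of_bool(bundle_contains (E0!1) it) + of_bool(bundle_contains (E0!2) it)"
  by (rule rate_eq[OF E0])
lemma NE0: "next_event 3 2 ex_pref (supl L0) = 1/3"
    unfolding next_event_def set_img items32
    apply (simp only: R0 filt_ins filt_empty)
    apply (simp add: sup_app L0_def E0_def bc)
    done
lemma S0: "supl L0 it - 1/3 * eat_rate 3 2 ex_pref (supl L0) it = supl L1 it"
  proof (cases it)
    case (Pair i k)
    show ?thesis
    proof (cases "i<2 \<and> k<3")
      case True
      then have "i=0 \<or> i=1" "k=0 \<or> k=1 \<or> k=2" using lt3 by auto
      then show ?thesis unfolding Pair R0 by (elim disjE) (simp_all add: sup_app L0_def L1_def E0_def bc)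
    next
      case False
      then show ?thesis unfolding Pair R0 by (auto simp add: sup_app L0_def L1_def E0_def bc nth_Cons' less_2_cases_iff)
    qed
  qed
lemma C0: "\<exists>it\<in>mps_items 3 2. 0 < supl L0 it" by (simp add: items32 sup_app L0_def)
lemma step0: "mps_step 3 2 ex_pref (supl L0, P) = (supl L1, \<lambda>j x. P j x + (if j<3 \<and> x = E0!j then 1/3 else 0))"
  by (rule step_gen[OF E0 C0 NE0 S0])

lemma E1: "j<3 \<Longrightarrow> eats 3 2 ex_pref (supl L1) j = E1!j"
  apply (rule three) unfolding E1_def L1_def
  by (intro conjI; rule eatsI; simp only: bundles32 ball_simps insert_iff; simp add: evs)
lemma R1: "eat_rate 3 2 ex_pref (supl L1) it = of_bool(bundle_contains (E1!0) it) + of_bool(bundle_contains (E1!1) it) + of_bool(bundle_contains (E1!2) it)"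
  by (rule rate_eq[OF E1])
lemma NE1: "next_event 3 2 ex_pref (supl L1) = 1/6"
    unfolding next_event_def set_img items32
    apply (simp only: R1 filt_ins filt_empty)
    apply (simp add: sup_app L1_def E1_def bc)
    done
lemma S1: "supl L1 it - 1/6 * eat_rate 3 2 ex_pref (supl L1) it = supl L2 it"
  proof (cases it)
    case (Pair i k)
    show ?thesis
    proof (cases "i<2 \<and> k<3")
      case True
      then have "i=0 \<or> i=1" "k=0 \<or> k=1 \<or> k=2" using lt3 by auto
      then show ?thesis unfolding Pair R1 by (elim disjE) (simp_all add: sup_app L1_def L2_def E1_def bc)
    next
      case False
      then show ?thesis unfolding Pair R1 by (auto simp add: sup_app L1_def L2_def E1_def bc nth_Cons' less_2_cases_iff)
    qed
  qed
lemma C1: "\<exists>it\<in>mps_items 3 2. 0 < supl L1 it" by (simp add: items32 sup_app L1_def)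
lemma step1: "mps_step 3 2 ex_pref (supl L1, P) = (supl L2, \<lambda>j x. P j x + (if j<3 \<and> x = E1!j then 1/6 else 0))"
  by (rule step_gen[OF E1 C1 NE1 S1])

lemma E2: "j<3 \<Longrightarrow> eats 3 2 ex_pref (supl L2) j = E2!j"
  apply (rule three) unfolding E2_def L2_def
  by (intro conjI; rule eatsI; simp only: bundles32 ball_simps insert_iff; simp add: evs)
lemma R2: "eat_rate 3 2 ex_pref (supl L2) it = of_bool(bundle_contains (E2!0) it) + of_bool(bundle_contains (E2!1) it) + of_bool(bundle_contains (E2!2) it)"
  by (rule rate_eq[OF E2])
lemma NE2: "next_event 3 2 ex_pref (supl L2) = 1/6"
    unfolding next_event_def set_img items32
    apply (simp only: R2 filt_ins filt_empty)
    apply (simp add: sup_app L2_def E2_def bc)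
    done
lemma S2: "supl L2 it - 1/6 * eat_rate 3 2 ex_pref (supl L2) it = supl L3 it"
  proof (cases it)
    case (Pair i k)
    show ?thesis
    proof (cases "i<2 \<and> k<3")
      case True
      then have "i=0 \<or> i=1" "k=0 \<or> k=1 \<or> k=2" using lt3 by auto
      then show ?thesis unfolding Pair R2 by (elim disjE) (simp_all add: sup_app L2_def L3_def E2_def bc)
    next
      case False
      then show ?thesis unfolding Pair R2 by (auto simp add: sup_app L2_def L3_def E2_def bc nth_Cons' less_2_cases_iff)
    qed
  qed
lemma C2: "\<exists>it\<in>mps_items 3 2. 0 < supl L2 it" by (simp add: items32 sup_app L2_def)
lemma step2: "mps_step 3 2 ex_pref (supl L2, P) = (supl L3, \<lambda>j x. P j x + (if j<3 \<and> x = E2!j then 1/6 else 0))"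
  by (rule step_gen[OF E2 C2 NE2 S2])

lemma E3: "j<3 \<Longrightarrow> eats 3 2 ex_pref (supl L3) j = E3!j"
  apply (rule three) unfolding E3_def L3_def
  by (intro conjI; rule eatsI; simp only: bundles32 ball_simps insert_iff; simp add: evs)
lemma R3: "eat_rate 3 2 ex_pref (supl L3) it = of_bool(bundle_contains (E3!0) it) + of_bool(bundle_contains (E3!1) it) + of_bool(bundle_contains (E3!2) it)"
  by (rule rate_eq[OF E3])
lemma NE3: "next_event 3 2 ex_pref (supl L3) = 1/12"
    unfolding next_event_def set_img items32
    apply (simp only: R3 filt_ins filt_empty)
    apply (simp add: sup_app L3_def E3_def bc)
    done
lemma S3: "supl L3 it - 1/12 * eat_rate 3 2 ex_pref (supl L3) it = supl L4 it"
  proof (cases it)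
    case (Pair i k)
    show ?thesis
    proof (cases "i<2 \<and> k<3")
      case True
      then have "i=0 \<or> i=1" "k=0 \<or> k=1 \<or> k=2" using lt3 by auto
      then show ?thesis unfolding Pair R3 by (elim disjE) (simp_all add: sup_app L3_def L4_def E3_def bc)
    next
      case False
      then show ?thesis unfolding Pair R3 by (auto simp add: sup_app L3_def L4_def E3_def bc nth_Cons' less_2_cases_iff)
    qed
  qed
lemma C3: "\<exists>it\<in>mps_items 3 2. 0 < supl L3 it" by (simp add: items32 sup_app L3_def)
lemma step3: "mps_step 3 2 ex_pref (supl L3, P) = (supl L4, \<lambda>j x. P j x + (if j<3 \<and> x = E3!j then 1/12 else 0))"
  by (rule step_gen[OF E3 C3 NE3 S3])

lemma E4: "j<3 \<Longrightarrow> eats 3 2 ex_pref (supl L4) j = E4!j"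
  apply (rule three) unfolding E4_def L4_def
  by (intro conjI; rule eatsI; simp only: bundles32 ball_simps insert_iff; simp add: evs)
lemma R4: "eat_rate 3 2 ex_pref (supl L4) it = of_bool(bundle_contains (E4!0) it) + of_bool(bundle_contains (E4!1) it) + of_bool(bundle_contains (E4!2) it)"
  by (rule rate_eq[OF E4])
lemma NE4: "next_event 3 2 ex_pref (supl L4) = 1/4"
    unfolding next_event_def set_img items32
    apply (simp only: R4 filt_ins filt_empty)
    apply (simp add: sup_app L4_def E4_def bc)
    done
lemma S4: "supl L4 it - 1/4 * eat_rate 3 2 ex_pref (supl L4) it = supl L5 it"
  proof (cases it)
    case (Pair i k)
    show ?thesis
    proof (cases "i<2 \<and> k<3")
      case True
      then have "i=0 \<or> i=1" "k=0 \<or> k=1 \<or> k=2" using lt3 by auto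
      then show ?thesis unfolding Pair R4 by (elim disjE) (simp_all add: sup_app L4_def L5_def E4_def bc)
    next
      case False
      then show ?thesis unfolding Pair R4 by (auto simp add: sup_app L4_def L5_def E4_def bc nth_Cons' less_2_cases_iff)
    qed
  qed
lemma C4: "\<exists>it\<in>mps_items 3 2. 0 < supl L4 it" by (simp add: items32 sup_app L4_def)
lemma step4: "mps_step 3 2 ex_pref (supl L4, P) = (supl L5, \<lambda>j x. P j x + (if j<3 \<and> x = E4!j then 1/4 else 0))"
  by (rule step_gen[OF E4 C4 NE4 S4])

lemma step5: "mps_step 3 2 ex_pref (supl L5, P) = (supl L5, P)"
proof -
  have "\<not> (\<exists>it\<in>mps_items 3 2. 0 < supl L5 it)" by (simp add: items32 sup_app L5_def)
  then show ?thesis unfolding mps_step_def Let_def by simp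
qed
lemma init: "(\<lambda>_. 1) = supl L0" by (rule ext) (auto simp: supl_def L0_def less_2_cases_iff dest!: lt3)
lemma MPS_eq: "MPS 3 2 ex_pref = (\<lambda>j x. 0 + (if j<3 \<and> x = E0!j then 1/3 else 0) + (if j<3 \<and> x = E1!j then 1/6 else 0)
   + (if j<3 \<and> x = E2!j then 1/6 else 0) + (if j<3 \<and> x = E3!j then 1/12 else 0) + (if j<3 \<and> x = E4!j then 1/4 else 0))"
proof -
  have f6: "(f ^^ 6) x = f (f (f (f (f (f x)))))" for f :: "'a \<Rightarrow> 'a" and x by (simp add: numeral_eq_Suc)
  have m: "(2::nat) * 3 = 6" by simp
  show ?thesis unfolding MPS_def init m f6 by (simp only: step0 step1 step2 step3 step4 step5 snd_conv)
qed

lemma filt02: "{x\<in>mps_bundles 3 2. bundle_contains x (0,2)} = {[2,0],[2,1],[2,2]}"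
  by (auto simp: bundles32 bc)
lemma filt11: "{x\<in>mps_bundles 3 2. bundle_contains x (1,1)} = {[0,1],[1,1],[2,1]}"
  by (auto simp: bundles32 bc)
lemma sum3: "(\<Sum>j<(3::nat). f j) = f 0 + f 1 + f 2" by (simp add: numeral_eq_Suc)
lemma disc_ineq:
  assumes "is_discrete_assignment 3 2 Q"
  shows "Q 2 [2,2] \<le> Q 0 [1,1] + Q 0 [0,1] + Q 1 [0,1] + Q 1 [1,1] + Q 1 [2,1]"
proof -
  have nn: "\<forall>j<3. \<forall>x\<in>mps_bundles 3 2. 0 \<le> Q j x"
   and row: "\<forall>j<3. (\<Sum>x\<in>mps_bundles 3 2. Q j x) = 1"
   and it: "\<forall>it\<in>mps_items 3 2. (\<Sum>j<3. \<Sum>x\<in>{x\<in>mps_bundles 3 2. bundle_contains x it}. Q j x) = 1"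
   and d: "\<forall>j<3. \<forall>x\<in>mps_bundles 3 2. Q j x \<in> {0, 1}"
    using assms unfolding is_discrete_assignment_def is_assignment_def by auto
  have i02: "(0,2) \<in> mps_items 3 2" and i11: "(1,1) \<in> mps_items 3 2" by (simp_all add: items32)
  have F2: "(\<Sum>j<3. \<Sum>x\<in>{[2,0],[2,1],[2,2]}. Q j x) = 1"
    using it[rule_format, OF i02] unfolding filt02 .
  have B1: "(\<Sum>j<3. \<Sum>x\<in>{[0,1],[1,1],[2,1]}. Q j x) = 1"
    using it[rule_format, OF i11] unfolding filt11 .
  have R2: "(\<Sum>x\<in>{[0,0],[0,1],[0,2],[1,0],[1,1],[1,2],[2,0],[2,1],[2,2]}. Q 2 x) = 1"
    using row[rule_format, of 2] unfolding bundles32 by simp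
  have nn': "\<And>j x. j<3 \<Longrightarrow> x\<in>{[0,0],[0,1],[0,2],[1,0],[1,1],[1,2],[2,0],[2,1],[2,2]} \<Longrightarrow> 0 \<le> Q j x"
    using nn unfolding bundles32 by blast
  have m22: "[2,2] \<in> mps_bundles 3 2" by (simp add: bundles32)
  have d22: "Q 2 [2,2] = 0 \<or> Q 2 [2,2] = 1" using d[rule_format, of 2 "[2,2]", OF _ m22] by simp
  have n: "0 \<le> Q j [a,b]" if "j<3" "a<3" "b<3" for j a b
  proof -
    have "[a,b] \<in> mps_bundles 3 2" using that by (simp add: mps_bundles_def all2)
    then show ?thesis using nn that(1) by blast
  qed
  have t: "(0::nat)<3" "(1::nat)<3" "(2::nat)<3" by simp_all
  have F2e: "Q 0 [2,0] + Q 0 [2,1] + Q 0 [2,2] + (Q 1 [2,0] + Q 1 [2,1] + Q 1 [2,2]) + (Q 2 [2,0] + Q 2 [2,1] + Q 2 [2,2]) = 1"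
    using F2 by (simp add: sum3 add.assoc)
  have B1e: "Q 0 [0,1] + Q 0 [1,1] + Q 0 [2,1] + (Q 1 [0,1] + Q 1 [1,1] + Q 1 [2,1]) + (Q 2 [0,1] + Q 2 [1,1] + Q 2 [2,1]) = 1"
    using B1 by (simp add: sum3 add.assoc)
  have R2e: "Q 2 [0,0] + (Q 2 [0,1] + (Q 2 [0,2] + (Q 2 [1,0] + (Q 2 [1,1] + (Q 2 [1,2] + (Q 2 [2,0] + (Q 2 [2,1] + Q 2 [2,2]))))))) = 1"
    using R2 by simp
  show ?thesis
  proof (cases "Q 2 [2,2] = 0")
    case True
    then show ?thesis using n[OF t(1) t(2) t(2)] n[OF t(1) t(1) t(2)] n[OF t(2) t(1) t(2)] n[OF t(2) t(2) t(2)] n[OF t(2) t(3) t(2)] by linarith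
  next
    case False
    then have "Q 2 [2,2] = 1" using d22 by simp
    then show ?thesis using F2e B1e R2e n[OF t(1) t(3) t(1)] n[OF t(1) t(3) t(3)] n[OF t(2) t(3) t(1)] n[OF t(2) t(3) t(2)] n[OF t(2) t(3) t(3)] n[OF t(3) t(3) t(1)] n[OF t(3) t(3) t(2)]
      n[OF t(3) t(1) t(1)] n[OF t(3) t(1) t(2)] n[OF t(3) t(1) t(3)] n[OF t(3) t(2) t(1)] n[OF t(3) t(2) t(2)] n[OF t(3) t(2) t(3)] n[OF t(1) t(3) t(2)]
      by linarith
  qed
qed

theorem mainTheorem15:
  shows "\<not> decomposable 3 2 (MPS 3 2 ex_pref)"
proof
  assume "decomposable 3 2 (MPS 3 2 ex_pref)"
  then obtain K :: nat and Q :: "nat \<Rightarrow> assignment" and w :: "nat \<Rightarrow> real" where dq: "\<forall>l<K. is_discrete_assignment 3 2 (Q l) \<and> 0 \<le> w l"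
    and ws: "(\<Sum>l<K. w l) = 1"
    and P: "\<forall>j<3. \<forall>x\<in>mps_bundles 3 2. MPS 3 2 ex_pref j x = (\<Sum>l<K. w l * Q l j x)"
    unfolding decomposable_def by (elim exE conjE) blast
  define g where "g l = Q l 0 [1,1] + Q l 0 [0,1] + Q l 1 [0,1] + Q l 1 [1,1] + Q l 1 [2,1]" for l
  have "(\<Sum>l<K. w l * Q l 2 [2,2]) \<le> (\<Sum>l<K. w l * g l)"
    using dq disc_ineq unfolding g_def by (intro sum_mono mult_left_mono) auto
  also have "\<dots> = (\<Sum>l<K. w l * Q l 0 [1,1]) + (\<Sum>l<K. w l * Q l 0 [0,1]) + (\<Sum>l<K. w l * Q l 1 [0,1])
      + (\<Sum>l<K. w l * Q l 1 [1,1]) + (\<Sum>l<K. w l * Q l 1 [2,1])"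
    unfolding g_def by (simp add: distrib_left sum.distrib)
  finally have ineq: "(\<Sum>l<K. w l * Q l 2 [2,2]) \<le> (\<Sum>l<K. w l * Q l 0 [1,1]) + (\<Sum>l<K. w l * Q l 0 [0,1]) + (\<Sum>l<K. w l * Q l 1 [0,1])
      + (\<Sum>l<K. w l * Q l 1 [1,1]) + (\<Sum>l<K. w l * Q l 1 [2,1])" .
  have v: "MPS 3 2 ex_pref j x = (\<Sum>l<K. w l * Q l j x)" if "j<3" "x \<in> mps_bundles 3 2" for j x
    using P that by auto
  have m1: "MPS 3 2 ex_pref 2 [2,2] = 1/4" "MPS 3 2 ex_pref 0 [1,1] = 1/6" "MPS 3 2 ex_pref 0 [0,1] = 0"
    "MPS 3 2 ex_pref 1 [0,1] = 0" "MPS 3 2 ex_pref 1 [1,1] = 0" "MPS 3 2 ex_pref 1 [2,1] = 0"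
    unfolding MPS_eq by (simp_all add: E0_def E1_def E2_def E3_def E4_def)
  have "(1/4::real) \<le> 1/6 + 0 + 0 + 0 + 0"
    using ineq v[of 2 "[2,2]"] v[of 0 "[1,1]"] v[of 0 "[0,1]"] v[of 1 "[0,1]"] v[of 1 "[1,1]"] v[of 1 "[2,1]"] m1
    unfolding bundles32 by simp
  then show False by simp
qed

end
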